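(* In the setting of the context, assume that $\widetilde F,\widetilde G\in\mathbb C(s)$, and define $\widetilde f=\tfrac12(\widetilde F+\widetilde F^{\iota_1})$, $\widetilde g=\tfrac12(\widetilde G+\widetilde G^{\iota_2})$, $\widetilde f_h=\tfrac12(\widetilde F-\widetilde F^{\iota_1})$, $\widetilde g_h=\tfrac12(\widetilde G-\widetilde G^{\iota_2})$. Then: (1) the pair $(h_1,h_2)=(\widetilde f,\widetilde g)$ satisfies $\widetilde\gamma_1h_1+\widetilde\gamma_2h_2+\omega=0$ with $h_1^{\iota_1}=h_1$ and $h_2^{\iota_2}=h_2$; (2) the pair $(h_1,h_2)=(\widetilde f_h,\widetilde g_h)$ satisfies $\widetilde\gamma_1h_1+\widetilde\gamma_2h_2=0$ with $h_1^{\iota_1}=-h_1$ and $h_2^{\iota_2}=-h_2$.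
   Context: Let $\mathcal S$ be one of $\mathcal S_1=\{(1,-1),(-1,1),(0,1)\}$, $\mathcal S_2=\{(1,-1),(-1,1),(1,0),(0,1)\}$, $\mathcal S_3=\{(1,-1),(-1,1),(1,1)\}$, $\mathcal S_4=\{(1,-1),(-1,1),(0,1),(1,1)\}$, $\mathcal S_5=\{(1,-1),(-1,1),(1,0),(0,1),(1,1)\}$ with weights $d_{i,j}>0$ on $\mathcal S$ and Boltzmann weights $a,b>0$; $\mathbb F=\mathbb Q((d_{i,j}),a,b)$, $A=1-1/a$, $B=1-1/b$, $\omega=1-A-B$. $Q(x,y)$ is the generating function of weighted quadrant walks with interacting boundaries on $\mathcal S$ (weight $\prod_vd_v^{n_v}a^{n_x}b^{n_y}$, $n_x,n_y$ the numbers of visits after time $0$ to the $x$- and $y$-axis, monomial $x^iy^jt^n$ for endpoint $(i,j)$ and length $n$). Fix a real $t>0$ transcendental over $\mathbb F$, small enough that $Q$ converges for $|x|,|y|<1$. Let $\phi:s\mapsto(x(s),y(s))$ be a fixed rational parametrization by $\mathbb P^1$ of the closure in $\mathbb P^1\times\mathbb P^1$ of $\{xy(1-t\sum_{(i,j)\in\mathcal S}d_{i,j}x^iy^j)=0\}$, with $x(0)=y(0)=x(\infty)=y(\infty)=0$, $x(1/s)=x(s)$, $y(q/s)=y(s)$ for a fixed real $q$ not a root of unity. Let $\iota_1(s)=1/s$, $\iota_2(s)=q/s$ and $h^\tau=h\circ\tau$. Let $\widetilde\gamma_1=A/x(s)-td_{1,-1}/y(s)$, $\widetilde\gamma_2=B/y(s)-td_{-1,1}/x(s)$,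 $\widetilde\gamma=\widetilde\gamma_1/\widetilde\gamma_2$. $\widetilde F$, $\widetilde G$ are the meromorphic continuations to $\mathbb C$ of $x(s)Q(x(s),0)$ and $y(s)Q(0,y(s))$; they satisfy $\widetilde\gamma_1\widetilde F+\widetilde\gamma_2\widetilde G+\omega=0$ and $\widetilde F(s/q)=\frac{\widetilde\gamma}{\widetilde\gamma^{\iota_2}}(s)\widetilde F(s)+\big(\frac{\omega}{\widetilde\gamma_2(s)}-\frac{\omega}{\widetilde\gamma_2^{\iota_2}(s)}\big)\frac{1}{\widetilde\gamma^{\iota_2}(s)}$. *)

theory Defs
  imports "HOL-Analysis.Analysis" "HOL-Computational_Algebra.Polynomial"
begin

definition stepset :: "nat \<Rightarrow> (int \<times> int) set" where
  "stepset k =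
    (if k = 1 then {(1,-1),(-1,1),(0,1)}
     else if k = 2 then {(1,-1),(-1,1),(1,0),(0,1)}
     else if k = 3 then {(1,-1),(-1,1),(1,1)}
     else if k = 4 then {(1,-1),(-1,1),(0,1),(1,1)}
     else {(1,-1),(-1,1),(1,0),(0,1),(1,1)})"

fun wcount :: "(int \<times> int) set \<Rightarrow> (int \<times> int \<Rightarrow> real) \<Rightarrow> real \<Rightarrow> real
                 \<Rightarrow> nat \<Rightarrow> int \<Rightarrow> int \<Rightarrow> real" where
  "wcount S d a b 0 i j = (if i = 0 \<and> j = 0 then 1 else 0)"
| "wcount S d a b (Suc n) i j =
     (if i \<ge> 0 \<and> j \<ge> 0 then
        (if j = 0 then a else 1) * (if i = 0 then b else 1) *
        (\<Sum>v\<in>S. d v * wcount S d a b n (i - fst v) (j - snd v))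
      else 0)"

definition Qgf :: "(int \<times> int) set \<Rightarrow> (int \<times> int \<Rightarrow> real) \<Rightarrow> real \<Rightarrow> real \<Rightarrow> real
                   \<Rightarrow> complex \<Rightarrow> complex \<Rightarrow> complex" where
  "Qgf S d a b t x y =
     (\<Sum>\<^sub>\<infinity>(n,i,j)\<in>UNIV. complex_of_real (wcount S d a b n (int i) (int j) * t ^ n)
                          * x ^ i * y ^ j)"

definition Qx0 :: "(int \<times> int) set \<Rightarrow> (int \<times> int \<Rightarrow> real) \<Rightarrow> real \<Rightarrow> real \<Rightarrow> real
                   \<Rightarrow> complex \<Rightarrow> complex" where
  "Qx0 S d a b t x = Qgf S d a b t x 0"

definition Q0y :: "(int \<times> int) set \<Rightarrow> (int \<times> int \<Rightarrow> real) \<Rightarrow> real \<Rightarrow> real \<Rightarrow> real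
                   \<Rightarrow> complex \<Rightarrow> complex" where
  "Q0y S d a b t y = Qgf S d a b t 0 y"

inductive_set gen_field :: "real set \<Rightarrow> real set" for X :: "real set" where
  gen_rat: "r \<in> \<rat> \<Longrightarrow> r \<in> gen_field X"
| gen_base: "r \<in> X \<Longrightarrow> r \<in> gen_field X"
| gen_add: "r \<in> gen_field X \<Longrightarrow> u \<in> gen_field X \<Longrightarrow> r + u \<in> gen_field X"
| gen_mult: "r \<in> gen_field X \<Longrightarrow> u \<in> gen_field X \<Longrightarrow> r * u \<in> gen_field X"
| gen_uminus: "r \<in> gen_field X \<Longrightarrow> - r \<in> gen_field X"
| gen_inverse: "r \<in> gen_field X \<Longrightarrow> inverse r \<in> gen_field X"

definition transcendental_over :: "real set \<Rightarrow> real \<Rightarrow> bool" where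
  "transcendental_over K t \<longleftrightarrow>
     (\<forall>p :: real poly. p \<noteq> 0 \<and> (\<forall>i. coeff p i \<in> K) \<longrightarrow> poly p t \<noteq> 0)"

text \<open>Rational functions are represented by complex functions p/q (q a nonzero
  polynomial); at the finitely many zeros of q the value is a junk value, so
  identities between rational functions are stated for all but finitely many s
  (filter cofinite).\<close>

definition is_ratfun :: "(complex \<Rightarrow> complex) \<Rightarrow> bool" where
  "is_ratfun f \<longleftrightarrow> (\<exists>p r :: complex poly. r \<noteq> 0 \<and> (\<forall>s. f s = poly p s / poly r s))"

text \<open>The polynomial xy(1 - t S(x,y)) = xy - t \<Sum> d_{i,j} x^{i+1} y^{j+1}.\<close>

definition kernel_poly :: "(int \<times> int) set \<Rightarrow> (int \<times> int \<Rightarrow> real) \<Rightarrow> real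
                          \<Rightarrow> complex \<Rightarrow> complex \<Rightarrow> complex" where
  "kernel_poly S d t X Y =
     X * Y - complex_of_real t *
       (\<Sum>v\<in>S. complex_of_real (d v) * X ^ nat (fst v + 1) * Y ^ nat (snd v + 1))"

end

theory Submission
  imports Defs
begin

lemma cof_at: fixes z :: complex
  assumes "eventually P cofinite" shows "eventually P (at z)"
proof -
  have fin: "finite {x. \<not> P x}" using assms by (simp add: eventually_cofinite)
  let ?S = "UNIV - ({x. \<not> P x} - {z})"
  have "open ?S" using fin by (intro open_Diff) (auto intro: finite_imp_closed)
  moreover have "z \<in> ?S" by auto
  moreover have "\<forall>x\<in>?S. x \<noteq> z \<longrightarrow> P x" by auto
  ultimately show ?thesis unfolding eventually_at_topological by blast
qed

lemma cof_inf: fixes z :: complex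
  assumes "eventually P cofinite" shows "eventually P at_infinity"
proof -
  have fin: "finite {x. \<not> P x}" using assms by (simp add: eventually_cofinite)
  then obtain b where b: "\<forall>x\<in>{x. \<not> P x}. norm x \<le> b"
    using finite_imp_bounded bounded_iff by blast
  show ?thesis unfolding eventually_at_infinity
    by (rule exI[of _ "b+1"]) (use b in force)
qed

lemma cof_ex: assumes "eventually P (cofinite :: complex filter)" shows "\<exists>s. P s"
  using assms eventually_happens' cofinite_bot infinite_UNIV_char_0 by blast

lemma poly_ev_nz: "(p::complex poly) \<noteq> 0 \<Longrightarrow> eventually (\<lambda>s. poly p s \<noteq> 0) cofinite"
  by (simp add: eventually_cofinite poly_roots_finite)

lemma cof_inv: fixes q :: complex assumes "q \<noteq> 0" "eventually P cofinite"
  shows "eventually (\<lambda>s. P (q / s)) cofinite"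
proof -
  have "{s. \<not> P (q / s)} \<subseteq> (\<lambda>u. q / u) ` {u. \<not> P u}"
  proof
    fix s assume "s \<in> {s. \<not> P (q / s)}"
    moreover have "s = q / (q / s)" using assms(1) by (cases "s = 0") auto
    ultimately show "s \<in> (\<lambda>u. q / u) ` {u. \<not> P u}" by blast
  qed
  then show ?thesis using assms(2) unfolding eventually_cofinite by (meson finite_imageI finite_subset)
qed

lemma LIN: assumes "is_ratfun x" "is_ratfun y"
  shows "(\<forall>\<^sub>F s in cofinite. \<alpha> * y s - \<beta> * x s = 0) \<or> (\<forall>\<^sub>F s in cofinite. \<alpha> * y s - \<beta> * x s \<noteq> 0)"
proof -
  obtain px rx where x: "rx \<noteq> 0" "\<forall>s. x s = poly px s / poly rx s" using assms(1) unfolding is_ratfun_def by blast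
  obtain py ry where y: "ry \<noteq> 0" "\<forall>s. y s = poly py s / poly ry s" using assms(2) unfolding is_ratfun_def by blast
  define N where "N = smult \<alpha> (py * rx) - smult \<beta> (px * ry)"
  have key: "\<alpha> * y s - \<beta> * x s = poly N s / (poly rx s * poly ry s)" if "poly rx s \<noteq> 0" "poly ry s \<noteq> 0" for s
    using that x y by (simp add: N_def field_simps)
  have ev: "\<forall>\<^sub>F s in cofinite. poly rx s \<noteq> 0 \<and> poly ry s \<noteq> 0"
    using poly_ev_nz[OF x(1)] poly_ev_nz[OF y(1)] by (rule eventually_conj)
  show ?thesis
  proof (cases "N = 0")
    case True then show ?thesis using ev key by (intro disjI1) (auto elim!: eventually_mono)
  next
    case False show ?thesis
    proof (intro disjI2 eventually_mono[OF eventually_conj[OF ev poly_ev_nz[OF False]]])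
      fix s assume "(poly rx s \<noteq> 0 \<and> poly ry s \<noteq> 0) \<and> poly N s \<noteq> 0"
      then show "\<alpha> * y s - \<beta> * x s \<noteq> 0" by (simp add: key)
    qed
  qed
qed

lemma ratfun_zero: assumes "is_ratfun x" "\<forall>\<^sub>F s in cofinite. x s = 0" shows "x = (\<lambda>_. 0)"
proof -
  obtain px rx where x: "rx \<noteq> 0" "\<forall>s. x s = poly px s / poly rx s" using assms(1) unfolding is_ratfun_def by blast
  have "px = 0"
  proof (rule ccontr)
    assume nz: "px \<noteq> 0"
    have "\<forall>s. \<not> (x s = 0 \<and> poly rx s \<noteq> 0 \<and> poly px s \<noteq> 0)" using x(2) by auto
    then show False
      using cof_ex[OF eventually_conj[OF assms(2) eventually_conj[OF poly_ev_nz[OF x(1)] poly_ev_nz[OF nz]]]]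
      by blast
  qed
  then show ?thesis using x by auto
qed



lemma KF: assumes "k \<in> {1..5::nat}"
  shows "kernel_poly (stepset k) d t X Y = X*Y - complex_of_real t * (complex_of_real (d (1,-1)) * X^2
     + complex_of_real (d (-1,1)) * Y^2
     + complex_of_real (if (0,1) \<in> stepset k then d (0,1) else 0) * X * Y^2
     + complex_of_real (if (1,0) \<in> stepset k then d (1,0) else 0) * X^2 * Y
     + complex_of_real (if (1,1) \<in> stepset k then d (1,1) else 0) * X^2 * Y^2)"
proof -
  have "k = 1 \<or> k = 2 \<or> k = 3 \<or> k = 4 \<or> k = 5" using assms by auto
  then show ?thesis
    by (elim disjE) (simp_all add: kernel_poly_def stepset_def algebra_simps power2_eq_square)
qed



lemma LIMc: fixes u v :: "complex \<Rightarrow> complex"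
  assumes "(u \<longlongrightarrow> 0) F" "F \<noteq> bot"
    "eventually (\<lambda>s. u s \<noteq> 0 \<and> v s = c * u s \<and> u s * v s - T*(\<alpha>*(u s)^2 + \<beta>*(v s)^2
        + \<gamma>*u s*(v s)^2 + \<delta>*(u s)^2* v s + \<epsilon>*(u s)^2*(v s)^2) = 0) F"
  shows "c - T*\<alpha> - T*\<beta>*c^2 = 0"
proof -
  have ev: "eventually (\<lambda>s. T*(\<gamma>*c^2*u s + \<delta>*c*u s + \<epsilon>*c^2*(u s)^2) = c - T*\<alpha> - T*\<beta>*c^2) F"
  proof (rule eventually_mono[OF assms(3)])
    fix s assume h: "u s \<noteq> 0 \<and> v s = c * u s \<and> u s * v s - T*(\<alpha>*(u s)^2 + \<beta>*(v s)^2
        + \<gamma>*u s*(v s)^2 + \<delta>*(u s)^2* v s + \<epsilon>*(u s)^2*(v s)^2) = 0"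
    have vs: "v s = c * u s" using h by blast
    have h0: "u s * v s - T*(\<alpha>*(u s)^2 + \<beta>*(v s)^2
        + \<gamma>*u s*(v s)^2 + \<delta>*(u s)^2 * v s + \<epsilon>*(u s)^2*(v s)^2) = 0" using h by blast
    have "u s * v s - T*(\<alpha>*(u s)^2 + \<beta>*(v s)^2
        + \<gamma>*u s*(v s)^2 + \<delta>*(u s)^2 * v s + \<epsilon>*(u s)^2*(v s)^2)
       = (u s)^2 * (c - T*\<alpha> - T*\<beta>*c^2 - T*(\<gamma>*c^2*u s + \<delta>*c*u s + \<epsilon>*c^2*(u s)^2))"
      unfolding vs power2_eq_square by algebra
    then have "(u s)^2 * (c - T*\<alpha> - T*\<beta>*c^2 - T*(\<gamma>*c^2*u s + \<delta>*c*u s + \<epsilon>*c^2*(u s)^2)) = 0"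
      using h0 by metis
    then show "T*(\<gamma>*c^2*u s + \<delta>*c*u s + \<epsilon>*c^2*(u s)^2) = c - T*\<alpha> - T*\<beta>*c^2"
      using h by simp
  qed
  have "((\<lambda>s. T*(\<gamma>*c^2*u s + \<delta>*c*u s + \<epsilon>*c^2*(u s)^2)) \<longlongrightarrow> T*(\<gamma>*c^2*0 + \<delta>*c*0 + \<epsilon>*c^2*0^2)) F"
    by (intro tendsto_intros assms(1))
  then have "((\<lambda>s. c - T*\<alpha> - T*\<beta>*c^2) \<longlongrightarrow> 0) F"
    using ev by (simp add: tendsto_cong)
  then show ?thesis using assms(2) tendsto_const_iff by blast
qed



lemma gf_closed0: "0 \<in> gen_field X" by (rule gen_rat) simp
lemma gf_closed1: "1 \<in> gen_field X" by (rule gen_rat) simp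
lemma gf_closed_diff: "r \<in> gen_field X \<Longrightarrow> u \<in> gen_field X \<Longrightarrow> r - u \<in> gen_field X"
  by (metis diff_conv_add_uminus gen_add gen_uminus)
lemma gf_closed_div: "r \<in> gen_field X \<Longrightarrow> u \<in> gen_field X \<Longrightarrow> r / u \<in> gen_field X"
  by (metis divide_inverse gen_inverse gen_mult)
lemmas gf_closed = gf_closed0 gf_closed1 gf_closed_diff gf_closed_div



lemma TR: fixes t P \<alpha> \<beta> :: real
  assumes "transcendental_over K t" "K = gen_field X" "P \<in> K" "\<alpha> \<in> K" "\<beta> \<in> K"
    "\<alpha> \<noteq> 0" "\<beta> \<noteq> 0" "P \<noteq> 0" "t > 0"
  shows "complex_of_real (t*\<alpha>/P) - complex_of_real t * complex_of_real \<alpha>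
     - complex_of_real t * complex_of_real \<beta> * (complex_of_real (t*\<alpha>/P))^2 \<noteq> 0"
proof
  assume "complex_of_real (t*\<alpha>/P) - complex_of_real t * complex_of_real \<alpha>
     - complex_of_real t * complex_of_real \<beta> * (complex_of_real (t*\<alpha>/P))^2 = 0"
  then have "complex_of_real (t*\<alpha>/P - t*\<alpha> - t*\<beta>*(t*\<alpha>/P)^2) = 0" by simp
  then have e: "t*\<alpha>/P - t*\<alpha> - t*\<beta>*(t*\<alpha>/P)^2 = 0" by (simp only: of_real_eq_0_iff)
  have id: "P^2/t * (t*\<alpha>/P - t*\<alpha> - t*\<beta>*(t*\<alpha>/P)^2) = \<alpha>*P - \<alpha>*P^2 - \<beta>*\<alpha>^2 * t^2"
  proof -
    have "P^2/t * (t*\<alpha>/P) = \<alpha>*P" using assms(8,9) by (simp add: power2_eq_square)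
    moreover have "P^2/t * (t*\<alpha>) = \<alpha>*P^2" using assms(8,9) by (simp add: power2_eq_square)
    moreover have "P^2/t * (t*\<beta>*(t*\<alpha>/P)^2) = \<beta>*\<alpha>^2 * t^2" using assms(8,9) by (simp add: power2_eq_square)
    ultimately show ?thesis by (simp add: right_diff_distrib)
  qed
  have "\<alpha>*P - \<alpha>*P^2 - \<beta>*\<alpha>^2 * t^2 = 0" using id e by simp
  then have z: "poly [:\<alpha>*P - \<alpha>*P^2, 0, - (\<beta>*\<alpha>^2):] t = 0" by (simp add: algebra_simps power2_eq_square)
  have nz: "[:\<alpha>*P - \<alpha>*P^2, 0, - (\<beta>*\<alpha>^2):] \<noteq> 0" using assms(6,7) by simp
  have c: "coeff [:\<alpha>*P - \<alpha>*P^2, 0, - (\<beta>*\<alpha>^2):] i \<in> K" for i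
  proof -
    have a: "\<alpha>*P - \<alpha>*P^2 \<in> K" using assms(2-5) by (auto simp: power2_eq_square intro!: gf_closed gen_mult)
    have b: "- (\<beta>*\<alpha>^2) \<in> K" using assms(2,4,5) by (auto simp: power2_eq_square intro!: gen_uminus gen_mult)
    consider "i = 0" | "i = 1" | "i = 2" | "i \<ge> 3" by linarith
    then show ?thesis
    proof cases
      case 1 then show ?thesis using a by simp
    next
      case 2 then show ?thesis using gf_closed(1)[of X] assms(2) by simp
    next
      case 3 then show ?thesis using b by (simp add: numeral_2_eq_2)
    next
      case 4
      have "degree [:\<alpha>*P - \<alpha>*P^2, 0, - (\<beta>*\<alpha>^2):] \<le> 2" by simp
      then have "coeff [:\<alpha>*P - \<alpha>*P^2, 0, - (\<beta>*\<alpha>^2):] i = 0" using 4 by (intro coeff_eq_0) linarith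
      then show ?thesis using gf_closed(1)[of X] assms(2) by simp
    qed
  qed
  have T: "\<forall>p :: real poly. p \<noteq> 0 \<and> (\<forall>i. coeff p i \<in> K) \<longrightarrow> poly p t \<noteq> 0"
    using assms(1) unfolding transcendental_over_def .
  show False using T nz c z by blast
qed



lemma ALG: fixes g1s g2s g1u g2u Fs Fu Finv Gu w :: complex
  assumes "g1s \<noteq> 0" "g2s \<noteq> 0" "g2u \<noteq> 0" "g1u*Fu + g2u*Gu + w = 0"
    "Finv = (g1u/g2u)/(g1s/g2s)*Fu + (w/g2u - w/g2s)/(g1s/g2s)"
  shows "g1s*Finv + g2s*Gu + w = 0"
proof -
  have e1: "g1s*Finv = g2s * ((g1u*Fu + w)/g2u) - w"
    using assms(1,2) unfolding assms(5) by (simp add: divide_simps) (simp add: algebra_simps)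
  have e0: "g1u*Fu + w = - (g2u*Gu)" using assms(4)
    by (subst eq_neg_iff_add_eq_0) (simp add: algebra_simps)
  have e2: "(g1u*Fu + w)/g2u = - Gu" unfolding e0 using assms(3) by simp
  show ?thesis unfolding e1 e2 by simp
qed




theorem lemma2p2:
  fixes k :: nat and d :: "int \<times> int \<Rightarrow> real" and a b t q :: real
    and x y F G :: "complex \<Rightarrow> complex"
  defines "S \<equiv> stepset k"
  defines "A \<equiv> 1 - 1 / a" and "B \<equiv> 1 - 1 / b"
  defines "\<omega> \<equiv> complex_of_real (1 - A - B)"
  defines "\<gamma>1 \<equiv> (\<lambda>s. complex_of_real A / x s - complex_of_real (t * d (1,-1)) / y s)"
  defines "\<gamma>2 \<equiv> (\<lambda>s. complex_of_real B / y s - complex_of_real (t * d (-1,1)) / x s)"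
  defines "\<gamma> \<equiv> (\<lambda>s. \<gamma>1 s / \<gamma>2 s)"
  defines "f \<equiv> (\<lambda>s. (F s + F (1 / s)) / 2)"
  defines "g \<equiv> (\<lambda>s. (G s + G (complex_of_real q / s)) / 2)"
  defines "fh \<equiv> (\<lambda>s. (F s - F (1 / s)) / 2)"
  defines "gh \<equiv> (\<lambda>s. (G s - G (complex_of_real q / s)) / 2)"
  assumes k: "k \<in> {1..5}"
    and d_pos: "\<forall>v\<in>S. d v > 0"
    and a_pos: "a > 0" and b_pos: "b > 0"
    and t_pos: "t > 0"
    and t_transc: "transcendental_over (gen_field (d ` S \<union> {a, b})) t"
    and conv: "\<forall>X Y :: complex. norm X < 1 \<longrightarrow> norm Y < 1 \<longrightarrow>
          (\<lambda>(n, i, j). norm (complex_of_real (wcount S d a b n (int i) (int j) * t ^ n)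
                               * X ^ i * Y ^ j)) summable_on UNIV"
    and q_nonroot: "\<forall>n::nat. n > 0 \<longrightarrow> q ^ n \<noteq> 1"
    \<comment> \<open>the rational parametrization s \<mapsto> (x(s), y(s)) of the kernel curve\<close>
    and x_rat: "is_ratfun x" and y_rat: "is_ratfun y"
    and on_curve: "\<forall>\<^sub>F s in cofinite. kernel_poly S d t (x s) (y s) = 0"
    and onto_curve: "\<forall>X Y. kernel_poly S d t X Y = 0 \<longrightarrow>
          (\<exists>s. isCont x s \<and> isCont y s \<and> x s = X \<and> y s = Y)"
    and generic_inj: "\<forall>\<^sub>F s in cofinite. \<forall>s'. isCont x s' \<and> isCont y s' \<and>
          x s' = x s \<and> y s' = y s \<longrightarrow> s' = s"
    and x_0: "(x \<longlongrightarrow> 0) (at 0)" and y_0: "(y \<longlongrightarrow> 0) (at 0)"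
    and x_inf: "(x \<longlongrightarrow> 0) at_infinity" and y_inf: "(y \<longlongrightarrow> 0) at_infinity"
    and x_inv: "\<forall>\<^sub>F s in cofinite. x (1 / s) = x s"
    and y_inv: "\<forall>\<^sub>F s in cofinite. y (complex_of_real q / s) = y s"
    \<comment> \<open>F, G: continuations of x(s)Q(x(s),0), y(s)Q(0,y(s)), assumed rational\<close>
    and F_rat: "is_ratfun F" and G_rat: "is_ratfun G"
    and F_cont: "\<forall>\<^sub>F s in at 0. F s = x s * Qx0 S d a b t (x s)"
    and G_cont: "\<forall>\<^sub>F s in at 0. G s = y s * Q0y S d a b t (y s)"
    and FG_eq: "\<forall>\<^sub>F s in cofinite. \<gamma>1 s * F s + \<gamma>2 s * G s + \<omega> = 0"
    and F_qdiff: "\<forall>\<^sub>F s in cofinite.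
          F (s / complex_of_real q) = \<gamma> s / \<gamma> (complex_of_real q / s) * F s
            + (\<omega> / \<gamma>2 s - \<omega> / \<gamma>2 (complex_of_real q / s)) / \<gamma> (complex_of_real q / s)"
  shows "((\<forall>\<^sub>F s in cofinite. \<gamma>1 s * f s + \<gamma>2 s * g s + \<omega> = 0)
           \<and> (\<forall>\<^sub>F s in cofinite. f (1 / s) = f s)
           \<and> (\<forall>\<^sub>F s in cofinite. g (complex_of_real q / s) = g s))
       \<and> ((\<forall>\<^sub>F s in cofinite. \<gamma>1 s * fh s + \<gamma>2 s * gh s = 0)
           \<and> (\<forall>\<^sub>F s in cofinite. fh (1 / s) = - fh s)
           \<and> (\<forall>\<^sub>F s in cofinite. gh (complex_of_real q / s) = - gh s))"
proof -
  have kk: "k = 1 \<or> k = 2 \<or> k = 3 \<or> k = 4 \<or> k = 5" using k by auto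
  have m1: "(1,-1) \<in> S" and m2: "(-1,1) \<in> S" using kk unfolding S_def stepset_def by auto
  have d1p: "d (1,-1) > 0" using d_pos m1 by blast
  have d2p: "d (-1,1) > 0" using d_pos m2 by blast
  have tnz: "complex_of_real t \<noteq> 0" using t_pos by simp
  have d1nz: "complex_of_real (d (1,-1)) \<noteq> 0" using d1p by simp
  have d2nz: "complex_of_real (d (-1,1)) \<noteq> 0" using d2p by simp
  define e01 where "e01 = complex_of_real (if (0,1) \<in> S then d (0,1) else 0)"
  define e10 where "e10 = complex_of_real (if (1,0) \<in> S then d (1,0) else 0)"
  define e11 where "e11 = complex_of_real (if (1,1) \<in> S then d (1,1) else 0)"
  define T where "T = complex_of_real t"
  define D1 where "D1 = complex_of_real (d (1,-1))"
  define D2 where "D2 = complex_of_real (d (-1,1))"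
  have Tnz: "T \<noteq> 0" and D1z: "D1 \<noteq> 0" and D2z: "D2 \<noteq> 0"
    using tnz d1nz d2nz by (simp_all add: T_def D1_def D2_def)
  have kern: "\<forall>\<^sub>F s in cofinite. x s * y s - T * (D1 * (x s)^2 + D2 * (y s)^2
      + e01 * x s * (y s)^2 + e10 * (x s)^2 * y s + e11 * (x s)^2 * (y s)^2) = 0"
    using on_curve unfolding KF[OF k] S_def e01_def e10_def e11_def T_def D1_def D2_def .
  have DEG: False if hx: "\<forall>\<^sub>F s in cofinite. x s = 0" and hy: "\<forall>\<^sub>F s in cofinite. y s = 0"
  proof -
    have x0: "x = (\<lambda>_. 0)" by (rule ratfun_zero[OF x_rat hx])
    have y0: "y = (\<lambda>_. 0)" by (rule ratfun_zero[OF y_rat hy])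
    obtain s where hs: "\<forall>s'. isCont x s' \<and> isCont y s' \<and> x s' = x s \<and> y s' = y s \<longrightarrow> s' = s"
      using cof_ex[OF generic_inj] by blast
    have "s + 1 = s" using hs[rule_format, of "s+1"] x0 y0 by simp
    then show False by simp
  qed
  have contra: False if "\<forall>\<^sub>F s in cofinite. P s" "\<forall>\<^sub>F s in cofinite. \<not> P s" for P :: "complex \<Rightarrow> bool"
    using cof_ex[OF eventually_conj[OF that]] by blast
  have xnz: "\<forall>\<^sub>F s in cofinite. x s \<noteq> 0"
  proof -
    have "(\<forall>\<^sub>F s in cofinite. x s = 0) \<or> (\<forall>\<^sub>F s in cofinite. x s \<noteq> 0)"
      using LIN[OF x_rat y_rat, of 0 "-1"] by simp
    moreover have False if xz: "\<forall>\<^sub>F s in cofinite. x s = 0"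
    proof -
      have "\<forall>\<^sub>F s in cofinite. y s = 0"
      proof (rule eventually_mono[OF eventually_conj[OF xz kern]])
        fix s assume h: "x s = 0 \<and> x s * y s - T * (D1 * (x s)^2 + D2 * (y s)^2
      + e01 * x s * (y s)^2 + e10 * (x s)^2 * y s + e11 * (x s)^2 * (y s)^2) = 0"
        have zs: "x s = 0" using h by blast
        have "x s * y s - T * (D1 * (x s)^2 + D2 * (y s)^2
          + e01 * x s * (y s)^2 + e10 * (x s)^2 * y s + e11 * (x s)^2 * (y s)^2) = 0" using h by blast
        then have "T * (D2 * (y s)^2) = 0" unfolding zs by simp
        then show "y s = 0" using Tnz D2z by simp
      qed
      then show False using DEG xz by blast
    qed
    ultimately show ?thesis by blast
  qed
  have ynz: "\<forall>\<^sub>F s in cofinite. y s \<noteq> 0"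
  proof -
    have "(\<forall>\<^sub>F s in cofinite. y s = 0) \<or> (\<forall>\<^sub>F s in cofinite. y s \<noteq> 0)"
      using LIN[OF x_rat y_rat, of 1 0] by simp
    moreover have False if yz: "\<forall>\<^sub>F s in cofinite. y s = 0"
    proof -
      have "\<forall>\<^sub>F s in cofinite. x s = 0"
      proof (rule eventually_mono[OF eventually_conj[OF yz kern]])
        fix s assume h: "y s = 0 \<and> x s * y s - T * (D1 * (x s)^2 + D2 * (y s)^2
      + e01 * x s * (y s)^2 + e10 * (x s)^2 * y s + e11 * (x s)^2 * (y s)^2) = 0"
        have zs: "y s = 0" using h by blast
        have "x s * y s - T * (D1 * (x s)^2 + D2 * (y s)^2
          + e01 * x s * (y s)^2 + e10 * (x s)^2 * y s + e11 * (x s)^2 * (y s)^2) = 0" using h by blast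
        then have "T * (D1 * (x s)^2) = 0" unfolding zs by simp
        then show "x s = 0" using Tnz D1z by simp
      qed
      then show False using DEG yz by blast
    qed
    ultimately show ?thesis by blast
  qed
  have qnz: "q \<noteq> 0"
  proof
    assume q0: "q = 0"
    have "\<forall>\<^sub>F s in cofinite. y 0 = y s" using y_inv by (simp add: q0)
    then have ev: "\<forall>\<^sub>F s in cofinite. y s = y 0" by (rule eventually_mono) simp
    have "(y \<longlongrightarrow> y 0) at_infinity" using tendsto_eventually[OF cof_inf[OF ev]] by simp
    then have "y 0 = 0" using tendsto_unique[OF _ _ y_inf] trivial_limit_at_infinity by blast
    then show False using contra[OF ev[unfolded \<open>y 0 = 0\<close>] ynz] by simp
  qed
  have KK: "gen_field (d ` S \<union> {a, b}) = gen_field (d ` S \<union> {a, b})" ..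
  have d1K: "d (1,-1) \<in> gen_field (d ` S \<union> {a, b})" using m1 by (intro gen_base) auto
  have d2K: "d (-1,1) \<in> gen_field (d ` S \<union> {a, b})" using m2 by (intro gen_base) auto
  have AK: "A \<in> gen_field (d ` S \<union> {a, b})" unfolding A_def
    by (intro gf_closed gen_base) auto
  have BK: "B \<in> gen_field (d ` S \<union> {a, b})" unfolding B_def
    by (intro gf_closed gen_base) auto
  have at0: "at (0::complex) \<noteq> bot" by simp
  have g1nz: "\<forall>\<^sub>F s in cofinite. \<gamma>1 s \<noteq> 0"
  proof -
    have "(\<forall>\<^sub>F s in cofinite. complex_of_real A * y s - complex_of_real (t * d (1,-1)) * x s = 0)
        \<or> (\<forall>\<^sub>F s in cofinite. complex_of_real A * y s - complex_of_real (t * d (1,-1)) * x s \<noteq> 0)"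
      by (rule LIN[OF x_rat y_rat])
    moreover have False if l0: "\<forall>\<^sub>F s in cofinite. complex_of_real A * y s - complex_of_real (t * d (1,-1)) * x s = 0"
    proof (cases "A = 0")
      case True
      have "\<forall>\<^sub>F s in cofinite. x s = 0"
        using l0 by (rule eventually_mono) (use True t_pos d1p in simp)
      then show False using contra xnz by blast
    next
      case False
      define c where "c = complex_of_real (t * d (1,-1) / A)"
      have "\<forall>\<^sub>F s in cofinite. x s \<noteq> 0 \<and> y s = c * x s \<and> x s * y s - T * (D1 * (x s)^2 + D2 * (y s)^2
          + e01 * x s * (y s)^2 + e10 * (x s)^2 * y s + e11 * (x s)^2 * (y s)^2) = 0"
      proof (rule eventually_mono[OF eventually_conj[OF xnz eventually_conj[OF l0 kern]]])
        fix s assume h: "x s \<noteq> 0 \<and> (complex_of_real A * y s - complex_of_real (t * d (1,-1)) * x s = 0 \<and>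
          x s * y s - T * (D1 * (x s)^2 + D2 * (y s)^2
          + e01 * x s * (y s)^2 + e10 * (x s)^2 * y s + e11 * (x s)^2 * (y s)^2) = 0)"
        have "y s = c * x s" using h False unfolding c_def by (simp add: field_simps)
        then show "x s \<noteq> 0 \<and> y s = c * x s \<and> x s * y s - T * (D1 * (x s)^2 + D2 * (y s)^2
          + e01 * x s * (y s)^2 + e10 * (x s)^2 * y s + e11 * (x s)^2 * (y s)^2) = 0" using h by blast
      qed
      then have "c - T*D1 - T*D2*c^2 = 0"
        by (intro LIMc[OF x_0 at0]) (rule cof_at)
      moreover have "c - T*D1 - T*D2*c^2 \<noteq> 0"
        unfolding c_def T_def D1_def D2_def
        by (rule TR[OF t_transc refl AK d1K d2K]) (use d1p d2p False t_pos in auto)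
      ultimately show False by blast
    qed
    ultimately have "\<forall>\<^sub>F s in cofinite. complex_of_real A * y s - complex_of_real (t * d (1,-1)) * x s \<noteq> 0"
      by blast
    then show ?thesis
    proof (rule eventually_mono[OF eventually_conj[OF eventually_conj[OF xnz ynz]]])
      fix s assume h: "(x s \<noteq> 0 \<and> y s \<noteq> 0) \<and> complex_of_real A * y s - complex_of_real (t * d (1,-1)) * x s \<noteq> 0"
      show "\<gamma>1 s \<noteq> 0"
      proof
        assume "\<gamma>1 s = 0"
        then have "complex_of_real A / x s = complex_of_real (t * d (1,-1)) / y s" unfolding \<gamma>1_def by simp
        then have "complex_of_real A * y s = complex_of_real (t * d (1,-1)) * x s" using h by (simp add: field_simps)
        then show False using h by simp
      qed
    qed
  qed
  have g2nz: "\<forall>\<^sub>F s in cofinite. \<gamma>2 s \<noteq> 0"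
  proof -
    have "(\<forall>\<^sub>F s in cofinite. complex_of_real B * x s - complex_of_real (t * d (-1,1)) * y s = 0)
        \<or> (\<forall>\<^sub>F s in cofinite. complex_of_real B * x s - complex_of_real (t * d (-1,1)) * y s \<noteq> 0)"
      by (rule LIN[OF y_rat x_rat])
    moreover have False if l0: "\<forall>\<^sub>F s in cofinite. complex_of_real B * x s - complex_of_real (t * d (-1,1)) * y s = 0"
    proof (cases "B = 0")
      case True
      have "\<forall>\<^sub>F s in cofinite. y s = 0"
        using l0 by (rule eventually_mono) (use True t_pos d2p in simp)
      then show False using contra ynz by blast
    next
      case False
      define c where "c = complex_of_real (t * d (-1,1) / B)"
      have "\<forall>\<^sub>F s in cofinite. y s \<noteq> 0 \<and> x s = c * y s \<and> y s * x s - T * (D2 * (y s)^2 + D1 * (x s)^2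
          + e10 * y s * (x s)^2 + e01 * (y s)^2 * x s + e11 * (y s)^2 * (x s)^2) = 0"
      proof (rule eventually_mono[OF eventually_conj[OF ynz eventually_conj[OF l0 kern]]])
        fix s assume h: "y s \<noteq> 0 \<and> (complex_of_real B * x s - complex_of_real (t * d (-1,1)) * y s = 0 \<and>
          x s * y s - T * (D1 * (x s)^2 + D2 * (y s)^2
          + e01 * x s * (y s)^2 + e10 * (x s)^2 * y s + e11 * (x s)^2 * (y s)^2) = 0)"
        have "x s = c * y s" using h False unfolding c_def by (simp add: field_simps)
        moreover have "y s * x s - T * (D2 * (y s)^2 + D1 * (x s)^2
          + e10 * y s * (x s)^2 + e01 * (y s)^2 * x s + e11 * (y s)^2 * (x s)^2) = 0"
        proof -
          have "y s * x s - T * (D2 * (y s)^2 + D1 * (x s)^2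
            + e10 * y s * (x s)^2 + e01 * (y s)^2 * x s + e11 * (y s)^2 * (x s)^2) =
            x s * y s - T * (D1 * (x s)^2 + D2 * (y s)^2
            + e01 * x s * (y s)^2 + e10 * (x s)^2 * y s + e11 * (x s)^2 * (y s)^2)"
            by (simp add: algebra_simps)
          then show ?thesis using h by simp
        qed
        ultimately show "y s \<noteq> 0 \<and> x s = c * y s \<and> y s * x s - T * (D2 * (y s)^2 + D1 * (x s)^2
          + e10 * y s * (x s)^2 + e01 * (y s)^2 * x s + e11 * (y s)^2 * (x s)^2) = 0" using h by blast
      qed
      then have "c - T*D2 - T*D1*c^2 = 0"
        by (intro LIMc[OF y_0 at0]) (rule cof_at)
      moreover have "c - T*D2 - T*D1*c^2 \<noteq> 0"
        unfolding c_def T_def D1_def D2_def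
        by (rule TR[OF t_transc refl BK d2K d1K]) (use d1p d2p False t_pos in auto)
      ultimately show False by blast
    qed
    ultimately have "\<forall>\<^sub>F s in cofinite. complex_of_real B * x s - complex_of_real (t * d (-1,1)) * y s \<noteq> 0"
      by blast
    then show ?thesis
    proof (rule eventually_mono[OF eventually_conj[OF eventually_conj[OF xnz ynz]]])
      fix s assume h: "(x s \<noteq> 0 \<and> y s \<noteq> 0) \<and> complex_of_real B * x s - complex_of_real (t * d (-1,1)) * y s \<noteq> 0"
      show "\<gamma>2 s \<noteq> 0"
      proof
        assume "\<gamma>2 s = 0"
        then have "complex_of_real B / y s = complex_of_real (t * d (-1,1)) / x s" unfolding \<gamma>2_def by simp
        then have "complex_of_real B * x s = complex_of_real (t * d (-1,1)) * y s" using h by (simp add: field_simps)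
        then show False using h by simp
      qed
    qed
  qed
  define cq where "cq = complex_of_real q"
  have cqnz: "cq \<noteq> 0" using qnz by (simp add: cq_def)
  have inv2: "cq / (cq / s) = s" for s using cqnz by (cases "s = 0") auto
  have inv3: "(cq / s) / cq = 1 / s" for s using cqnz by (simp add: field_simps)
  have EV: "\<forall>\<^sub>F s in cofinite. (\<gamma>1 s * F s + \<gamma>2 s * G s + \<omega> = 0)
      \<and> (\<gamma>1 (cq/s) * F (cq/s) + \<gamma>2 (cq/s) * G (cq/s) + \<omega> = 0)
      \<and> (F ((cq/s) / cq) = \<gamma> (cq/s) / \<gamma> (cq / (cq/s)) * F (cq/s)
            + (\<omega> / \<gamma>2 (cq/s) - \<omega> / \<gamma>2 (cq / (cq/s))) / \<gamma> (cq / (cq/s)))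
      \<and> \<gamma>1 s \<noteq> 0 \<and> \<gamma>2 s \<noteq> 0 \<and> \<gamma>2 (cq/s) \<noteq> 0"
    by (rule eventually_conj[OF FG_eq eventually_conj[OF cof_inv[OF cqnz FG_eq[folded cq_def]]
        eventually_conj[OF cof_inv[OF cqnz F_qdiff[folded cq_def]]
        eventually_conj[OF g1nz eventually_conj[OF g2nz cof_inv[OF cqnz g2nz]]]]]])
  have E: "\<forall>\<^sub>F s in cofinite. (\<gamma>1 s * F s + \<gamma>2 s * G s + \<omega> = 0)
      \<and> \<gamma>1 s * F (1/s) + \<gamma>2 s * G (cq/s) + \<omega> = 0"
  proof (rule eventually_mono[OF EV])
    fix s assume h: "(\<gamma>1 s * F s + \<gamma>2 s * G s + \<omega> = 0)
      \<and> (\<gamma>1 (cq/s) * F (cq/s) + \<gamma>2 (cq/s) * G (cq/s) + \<omega> = 0)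
      \<and> (F ((cq/s) / cq) = \<gamma> (cq/s) / \<gamma> (cq / (cq/s)) * F (cq/s)
            + (\<omega> / \<gamma>2 (cq/s) - \<omega> / \<gamma>2 (cq / (cq/s))) / \<gamma> (cq / (cq/s)))
      \<and> \<gamma>1 s \<noteq> 0 \<and> \<gamma>2 s \<noteq> 0 \<and> \<gamma>2 (cq/s) \<noteq> 0"
    have qd: "F (1/s) = (\<gamma>1 (cq/s) / \<gamma>2 (cq/s)) / (\<gamma>1 s / \<gamma>2 s) * F (cq/s)
            + (\<omega> / \<gamma>2 (cq/s) - \<omega> / \<gamma>2 s) / (\<gamma>1 s / \<gamma>2 s)"
      using h unfolding inv2 inv3 \<gamma>_def by blast
    have "\<gamma>1 s * F (1/s) + \<gamma>2 s * G (cq/s) + \<omega> = 0"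
      by (rule ALG[OF _ _ _ _ qd]) (use h in auto)
    then show "(\<gamma>1 s * F s + \<gamma>2 s * G s + \<omega> = 0) \<and> \<gamma>1 s * F (1/s) + \<gamma>2 s * G (cq/s) + \<omega> = 0"
      using h by blast
  qed
  have c1: "\<forall>\<^sub>F s in cofinite. \<gamma>1 s * f s + \<gamma>2 s * g s + \<omega> = 0"
  proof (rule eventually_mono[OF E])
    fix s assume h: "(\<gamma>1 s * F s + \<gamma>2 s * G s + \<omega> = 0) \<and> \<gamma>1 s * F (1/s) + \<gamma>2 s * G (cq/s) + \<omega> = 0"
    have "\<gamma>1 s * f s + \<gamma>2 s * g s + \<omega> = ((\<gamma>1 s * F s + \<gamma>2 s * G s + \<omega>) + (\<gamma>1 s * F (1/s) + \<gamma>2 s * G (cq/s) + \<omega>)) / 2"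
      unfolding f_def g_def cq_def by (simp add: field_simps)
    then show "\<gamma>1 s * f s + \<gamma>2 s * g s + \<omega> = 0" using h by simp
  qed
  have c4: "\<forall>\<^sub>F s in cofinite. \<gamma>1 s * fh s + \<gamma>2 s * gh s = 0"
  proof (rule eventually_mono[OF E])
    fix s assume h: "(\<gamma>1 s * F s + \<gamma>2 s * G s + \<omega> = 0) \<and> \<gamma>1 s * F (1/s) + \<gamma>2 s * G (cq/s) + \<omega> = 0"
    have "\<gamma>1 s * fh s + \<gamma>2 s * gh s = ((\<gamma>1 s * F s + \<gamma>2 s * G s + \<omega>) - (\<gamma>1 s * F (1/s) + \<gamma>2 s * G (cq/s) + \<omega>)) / 2"
      unfolding fh_def gh_def cq_def by (simp add: field_simps)
    then show "\<gamma>1 s * fh s + \<gamma>2 s * gh s = 0" using h by simp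
  qed
  have c2: "\<forall>\<^sub>F s in cofinite. f (1 / s) = f s"
    by (intro always_eventually allI) (simp add: f_def add.commute)
  have c3: "\<forall>\<^sub>F s in cofinite. g (complex_of_real q / s) = g s"
    by (intro always_eventually allI) (simp add: g_def inv2[unfolded cq_def] add.commute qnz)
  have c5: "\<forall>\<^sub>F s in cofinite. fh (1 / s) = - fh s"
    by (intro always_eventually allI) (simp add: fh_def diff_divide_distrib)
  have c6: "\<forall>\<^sub>F s in cofinite. gh (complex_of_real q / s) = - gh s"
    by (intro always_eventually allI) (simp add: gh_def inv2[unfolded cq_def] qnz diff_divide_distrib)
  show ?thesis using c1 c2 c3 c4 c5 c6 by blast
qed

end
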